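(* Let $\mathscr T=(V,\mathcal E)$ be the directed Cartesian product of rooted directed trees $\mathscr T_1,\dots,\mathscr T_d$, let $S_{\boldsymbol\lambda}=(S_1,\dots,S_d)$ be a commuting joint left invertible multishift on $\mathscr T$, and let $S^{\mathfrak s}_{\boldsymbol\lambda}$ be its spherical Cauchy dual. Then the following are equivalent: (i) $S^{\mathfrak s}_{\boldsymbol\lambda}$ is commuting; (ii) for every $v\in V^\circ$, the function $\mathfrak C(u)=\sum_{j=1}^d\|S_je_u\|^2$ is constant on $\mathsf{Par}(v)=\{u\in V:(u,v)\in\mathcal E\}$; (iii) there exist a joint isometry multishift $T_{\boldsymbol\lambda}=(T_1,\dots,T_d)$ on $\mathscr T$ and a block diagonal, positive, invertible bounded operator $D_c$ on $l^2(V)$ such that $S_j=T_jD_c$ for $j=1,\dots,d$. In this case the decomposition in (iii) is unique.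
   Context: Directed trees: no loops or circuits, connected ignoring orientation, unique parent $\mathsf{par}(v)$ for vertices with incoming edges; rooted: unique parentless vertex $\mathsf{root}$; $\mathsf{Chi}(u)=\{v:(u,v)\in\mathcal E\}$; all leafless. Directed Cartesian product of rooted trees $\mathscr T_j=(V_j,\mathcal E_j)$: $V=V_1\times\dots\times V_d$ (countably infinite), $(v,w)\in\mathcal E$ iff for some $k$, $(v_k,w_k)\in\mathcal E_k$ and $w_j=v_j$ ($j\ne k$); $\mathsf{root}=(\mathsf{root}_j)$, $V^\circ=V\setminus\{\mathsf{root}\}$. $\mathsf{Chi}_j(v)=\{w:w_j\in\mathsf{Chi}(v_j),w_k=v_k\ (k\ne j)\}$. Multishift with positive weights $\lambda^{(j)}_v$: $S_je_v=\sum_{w\in\mathsf{Chi}_j(v)}\lambda^{(j)}_we_w$, bounded on $l^2(V)$. Joint left invertible: $\sum_iS_i^*S_i$ invertible; spherical Cauchy dual: $S^{\mathfrak s}_j=S_j(\sum_iS_i^*S_i)^{-1}$. Joint isometry: commuting tuple with $\sum_jT_j^*T_j=I$. *)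

theory Defs
  imports "HOL-Analysis.Analysis"
begin

definition tpar :: "('a \<times> 'a) set \<Rightarrow> 'a \<Rightarrow> 'a" where
  "tpar E v = (THE u. (u, v) \<in> E)"

definition rooted_dtree :: "'a set \<Rightarrow> ('a \<times> 'a) set \<Rightarrow> 'a \<Rightarrow> bool" where
  "rooted_dtree V E r \<longleftrightarrow>
     E \<subseteq> V \<times> V \<and>
     (\<forall>v. (v, v) \<notin> E) \<and>
     acyclic E \<and>
     (\<forall>u\<in>V. \<forall>v\<in>V. (u, v) \<in> (E \<union> E\<inverse>)\<^sup>*) \<and>
     (\<forall>u v w. (u, w) \<in> E \<longrightarrow> (v, w) \<in> E \<longrightarrow> u = v) \<and>
     r \<in> V \<and>
     (\<forall>v\<in>V. (\<not> (\<exists>u. (u, v) \<in> E)) \<longleftrightarrow> v = r)"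

definition leafless :: "'a set \<Rightarrow> ('a \<times> 'a) set \<Rightarrow> bool" where
  "leafless V E \<longleftrightarrow> (\<forall>v\<in>V. \<exists>w. (v, w) \<in> E)"

definition prodV :: "nat \<Rightarrow> (nat \<Rightarrow> 'a set) \<Rightarrow> (nat \<Rightarrow> 'a) set" where
  "prodV d Vt = PiE {..<d} Vt"

definition prodE :: "nat \<Rightarrow> (nat \<Rightarrow> 'a set) \<Rightarrow> (nat \<Rightarrow> ('a \<times> 'a) set) \<Rightarrow> ((nat \<Rightarrow> 'a) \<times> (nat \<Rightarrow> 'a)) set" where
  "prodE d Vt Et = {(v, w). v \<in> prodV d Vt \<and> w \<in> prodV d Vt \<and>
      (\<exists>k<d. (v k, w k) \<in> Et k \<and> (\<forall>j. j \<noteq> k \<longrightarrow> w j = v j))}"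

definition prod_root :: "nat \<Rightarrow> (nat \<Rightarrow> 'a) \<Rightarrow> (nat \<Rightarrow> 'a)" where
  "prod_root d r = restrict r {..<d}"

definition Par :: "nat \<Rightarrow> (nat \<Rightarrow> 'a set) \<Rightarrow> (nat \<Rightarrow> ('a \<times> 'a) set) \<Rightarrow> (nat \<Rightarrow> 'a) \<Rightarrow> (nat \<Rightarrow> 'a) set" where
  "Par d Vt Et v = {u. (u, v) \<in> prodE d Vt Et}"

definition l2 :: "'b set \<Rightarrow> ('b \<Rightarrow> complex) set" where
  "l2 A = {f. (\<forall>x. x \<notin> A \<longrightarrow> f x = 0) \<and> (\<lambda>x. (cmod (f x))\<^sup>2) summable_on UNIV}"

definition l2inner :: "('b \<Rightarrow> complex) \<Rightarrow> ('b \<Rightarrow> complex) \<Rightarrow> complex" where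
  "l2inner f g = (\<Sum>\<^sub>\<infinity>x. f x * cnj (g x))"

definition l2norm :: "('b \<Rightarrow> complex) \<Rightarrow> real" where
  "l2norm f = sqrt (\<Sum>\<^sub>\<infinity>x. (cmod (f x))\<^sup>2)"

definition basis_vec :: "'b \<Rightarrow> ('b \<Rightarrow> complex)" where
  "basis_vec u = (\<lambda>x. if x = u then 1 else 0)"

definition bounded_op :: "'b set \<Rightarrow> (('b \<Rightarrow> complex) \<Rightarrow> ('b \<Rightarrow> complex)) \<Rightarrow> bool" where
  "bounded_op A T \<longleftrightarrow>
     (\<forall>f\<in>l2 A. T f \<in> l2 A) \<and>
     (\<forall>f\<in>l2 A. \<forall>g\<in>l2 A. \<forall>a b. T (\<lambda>x. a * f x + b * g x) = (\<lambda>x. a * T f x + b * T g x)) \<and>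
     (\<exists>K. \<forall>f\<in>l2 A. l2norm (T f) \<le> K * l2norm f)"

definition is_adjoint :: "'b set \<Rightarrow> (('b \<Rightarrow> complex) \<Rightarrow> ('b \<Rightarrow> complex)) \<Rightarrow> (('b \<Rightarrow> complex) \<Rightarrow> ('b \<Rightarrow> complex)) \<Rightarrow> bool" where
  "is_adjoint A T T' \<longleftrightarrow> bounded_op A T' \<and>
     (\<forall>f\<in>l2 A. \<forall>g\<in>l2 A. l2inner (T f) g = l2inner f (T' g))"

definition adjoint_op :: "'b set \<Rightarrow> (('b \<Rightarrow> complex) \<Rightarrow> ('b \<Rightarrow> complex)) \<Rightarrow> (('b \<Rightarrow> complex) \<Rightarrow> ('b \<Rightarrow> complex))" where
  "adjoint_op A T = (SOME T'. is_adjoint A T T')"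

definition is_inverse_op :: "'b set \<Rightarrow> (('b \<Rightarrow> complex) \<Rightarrow> ('b \<Rightarrow> complex)) \<Rightarrow> (('b \<Rightarrow> complex) \<Rightarrow> ('b \<Rightarrow> complex)) \<Rightarrow> bool" where
  "is_inverse_op A T R \<longleftrightarrow> bounded_op A R \<and> (\<forall>f\<in>l2 A. R (T f) = f \<and> T (R f) = f)"

definition invertible_op :: "'b set \<Rightarrow> (('b \<Rightarrow> complex) \<Rightarrow> ('b \<Rightarrow> complex)) \<Rightarrow> bool" where
  "invertible_op A T \<longleftrightarrow> bounded_op A T \<and> (\<exists>R. is_inverse_op A T R)"

definition inverse_op :: "'b set \<Rightarrow> (('b \<Rightarrow> complex) \<Rightarrow> ('b \<Rightarrow> complex)) \<Rightarrow> (('b \<Rightarrow> complex) \<Rightarrow> ('b \<Rightarrow> complex))" where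
  "inverse_op A T = (SOME R. is_inverse_op A T R)"

definition positive_op :: "'b set \<Rightarrow> (('b \<Rightarrow> complex) \<Rightarrow> ('b \<Rightarrow> complex)) \<Rightarrow> bool" where
  "positive_op A T \<longleftrightarrow> (\<forall>f\<in>l2 A. Im (l2inner (T f) f) = 0 \<and> 0 \<le> Re (l2inner (T f) f))"

text \<open>Block diagonal = diagonal with respect to the orthonormal basis (e_v).\<close>
definition diagonal_op :: "'b set \<Rightarrow> (('b \<Rightarrow> complex) \<Rightarrow> ('b \<Rightarrow> complex)) \<Rightarrow> bool" where
  "diagonal_op A T \<longleftrightarrow> (\<exists>c. \<forall>f\<in>l2 A. T f = (\<lambda>x. c x * f x))"

definition commuting_tuple :: "'b set \<Rightarrow> nat \<Rightarrow> (nat \<Rightarrow> ('b \<Rightarrow> complex) \<Rightarrow> ('b \<Rightarrow> complex)) \<Rightarrow> bool" where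
  "commuting_tuple A d T \<longleftrightarrow> (\<forall>i<d. \<forall>j<d. \<forall>f\<in>l2 A. T i (T j f) = T j (T i f))"

definition joint_gram :: "'b set \<Rightarrow> nat \<Rightarrow> (nat \<Rightarrow> ('b \<Rightarrow> complex) \<Rightarrow> ('b \<Rightarrow> complex)) \<Rightarrow> ('b \<Rightarrow> complex) \<Rightarrow> ('b \<Rightarrow> complex)" where
  "joint_gram A d T = (\<lambda>f x. \<Sum>i<d. adjoint_op A (T i) (T i f) x)"

definition joint_left_invertible :: "'b set \<Rightarrow> nat \<Rightarrow> (nat \<Rightarrow> ('b \<Rightarrow> complex) \<Rightarrow> ('b \<Rightarrow> complex)) \<Rightarrow> bool" where
  "joint_left_invertible A d T \<longleftrightarrow> (\<forall>i<d. bounded_op A (T i)) \<and> invertible_op A (joint_gram A d T)"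

definition spherical_cauchy_dual :: "'b set \<Rightarrow> nat \<Rightarrow> (nat \<Rightarrow> ('b \<Rightarrow> complex) \<Rightarrow> ('b \<Rightarrow> complex)) \<Rightarrow> nat \<Rightarrow> ('b \<Rightarrow> complex) \<Rightarrow> ('b \<Rightarrow> complex)" where
  "spherical_cauchy_dual A d T = (\<lambda>j f. T j (inverse_op A (joint_gram A d T) f))"

definition joint_isometry :: "'b set \<Rightarrow> nat \<Rightarrow> (nat \<Rightarrow> ('b \<Rightarrow> complex) \<Rightarrow> ('b \<Rightarrow> complex)) \<Rightarrow> bool" where
  "joint_isometry A d T \<longleftrightarrow> (\<forall>i<d. bounded_op A (T i)) \<and> commuting_tuple A d T \<and>
     (\<forall>f\<in>l2 A. joint_gram A d T f = f)"

text \<open>S_j with weights lam: S_j e_v = sum over w in Chi_j(v) of lam w e_w, i.e.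
  (S_j f)(w) = lam w * f(par_j w) if w_j is not the root of T_j, and 0 otherwise.\<close>
definition mshift :: "nat \<Rightarrow> (nat \<Rightarrow> 'a set) \<Rightarrow> (nat \<Rightarrow> ('a \<times> 'a) set) \<Rightarrow> (nat \<Rightarrow> 'a)
    \<Rightarrow> ((nat \<Rightarrow> 'a) \<Rightarrow> real) \<Rightarrow> nat \<Rightarrow> ((nat \<Rightarrow> 'a) \<Rightarrow> complex) \<Rightarrow> ((nat \<Rightarrow> 'a) \<Rightarrow> complex)" where
  "mshift d Vt Et r lam j f = (\<lambda>w. if w \<in> prodV d Vt \<and> w j \<noteq> r j
      then complex_of_real (lam w) * f (w(j := tpar (Et j) (w j))) else 0)"

definition positive_weights :: "nat \<Rightarrow> (nat \<Rightarrow> 'a set) \<Rightarrow> (nat \<Rightarrow> 'a) \<Rightarrow> (nat \<Rightarrow> (nat \<Rightarrow> 'a) \<Rightarrow> real) \<Rightarrow> bool" where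
  "positive_weights d Vt r lam \<longleftrightarrow> (\<forall>j<d. \<forall>w\<in>prodV d Vt. w j \<noteq> r j \<longrightarrow> 0 < lam j w)"

definition isometric_decomp :: "nat \<Rightarrow> (nat \<Rightarrow> 'a set) \<Rightarrow> (nat \<Rightarrow> ('a \<times> 'a) set) \<Rightarrow> (nat \<Rightarrow> 'a)
    \<Rightarrow> (nat \<Rightarrow> (nat \<Rightarrow> 'a) \<Rightarrow> real) \<Rightarrow> (nat \<Rightarrow> (nat \<Rightarrow> 'a) \<Rightarrow> real)
    \<Rightarrow> (((nat \<Rightarrow> 'a) \<Rightarrow> complex) \<Rightarrow> ((nat \<Rightarrow> 'a) \<Rightarrow> complex)) \<Rightarrow> bool" where
  "isometric_decomp d Vt Et r lam mu D \<longleftrightarrow>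
     positive_weights d Vt r mu \<and>
     joint_isometry (prodV d Vt) d (\<lambda>j. mshift d Vt Et r (mu j) j) \<and>
     diagonal_op (prodV d Vt) D \<and> positive_op (prodV d Vt) D \<and>
     invertible_op (prodV d Vt) D \<and> bounded_op (prodV d Vt) D \<and>
     (\<forall>j<d. \<forall>f\<in>l2 (prodV d Vt).
        mshift d Vt Et r (lam j) j f = mshift d Vt Et r (mu j) j (D f))"

end

theory Submission
  imports Defs
begin

lemma l2_summ: "f \<in> l2 A \<Longrightarrow> (\<lambda>x. (cmod (f x))\<^sup>2) summable_on UNIV"
  by (simp add: l2_def)

lemma l2_zero: "f \<in> l2 A \<Longrightarrow> x \<notin> A \<Longrightarrow> f x = 0"
  by (simp add: l2_def)

lemma infsum_single_pt:
  fixes f :: "'b \<Rightarrow> 'c::{comm_monoid_add,t2_space}"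
  assumes "\<And>y. y \<noteq> x \<Longrightarrow> f y = 0"
  shows "infsum f UNIV = f x"
proof -
  have "infsum f UNIV = infsum f {x}"
    by (rule infsum_cong_neutral) (use assms in auto)
  then show ?thesis by simp
qed

lemma summable_single_pt:
  fixes f :: "'b \<Rightarrow> 'c::{comm_monoid_add,t2_space}"
  assumes "\<And>y. y \<noteq> x \<Longrightarrow> f y = 0"
  shows "f summable_on UNIV"
proof -
  have "f summable_on {x}" by simp
  then show ?thesis
    by (subst summable_on_cong_neutral[where T="{x}" and g=f]) (use assms in auto)
qed

lemma basis_l2: "x \<in> A \<Longrightarrow> basis_vec x \<in> l2 A"
  unfolding l2_def basis_vec_def
  by (auto intro!: summable_single_pt[where x=x])

lemma l2norm_single: "l2norm (\<lambda>y. if y = x then a else 0) = cmod a"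
proof -
  have "(\<Sum>\<^sub>\<infinity>y. (cmod (if y = x then a else 0))\<^sup>2) = (cmod a)\<^sup>2"
    by (subst infsum_single_pt[where x=x]) auto
  then show ?thesis unfolding l2norm_def by simp
qed

lemma l2norm_basis: "l2norm (basis_vec x) = 1"
  unfolding basis_vec_def by (simp add: l2norm_single)

lemma l2inner_basis: "l2inner (basis_vec x) h = cnj (h x)"
  unfolding l2inner_def basis_vec_def
  by (subst infsum_single_pt[where x=x]) auto

lemma l2norm_nonneg: "0 \<le> l2norm f"
  unfolding l2norm_def by (simp add: infsum_nonneg)

lemma l2norm_sq: "(l2norm f)\<^sup>2 = (\<Sum>\<^sub>\<infinity>x. (cmod (f x))\<^sup>2)"
  unfolding l2norm_def by (simp add: infsum_nonneg)

lemma infsum_of_real':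
  "infsum (\<lambda>x. complex_of_real (g x)) A = complex_of_real (infsum g A)"
proof (cases "g summable_on A")
  case True
  then have "(g has_sum infsum g A) A" by (simp add: has_sum_infsum)
  then have "((\<lambda>x. complex_of_real (g x)) has_sum of_real (infsum g A)) A"
    using has_sum_of_real_iff by blast
  then show ?thesis by (simp add: infsumI)
next
  case False
  have "\<not> (\<lambda>x. complex_of_real (g x)) summable_on A"
  proof
    assume "(\<lambda>x. complex_of_real (g x)) summable_on A"
    from summable_on_Re[OF this] show False using False by simp
  qed
  then show ?thesis using False by (simp add: infsum_not_exists)
qed

lemma prod_abs_summable:
  fixes f g :: "'b \<Rightarrow> complex"
  assumes "(\<lambda>x. (cmod (f x))\<^sup>2) summable_on U" "(\<lambda>x. (cmod (g x))\<^sup>2) summable_on U"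
  shows "(\<lambda>x. norm (f x * cnj (g x))) summable_on U"
proof -
  have "(\<lambda>x. (cmod (f x))\<^sup>2 + (cmod (g x))\<^sup>2) summable_on U"
    using assms by (rule summable_on_add)
  moreover have "norm (f x * cnj (g x)) \<le> (cmod (f x))\<^sup>2 + (cmod (g x))\<^sup>2" for x
  proof -
    have "2 * (cmod (f x) * cmod (g x)) \<le> (cmod (f x))\<^sup>2 + (cmod (g x))\<^sup>2"
      using sum_squares_bound[of "cmod (f x)" "cmod (g x)"] by (simp add: power2_eq_square)
    moreover have "0 \<le> cmod (f x) * cmod (g x)" by simp
    ultimately have "cmod (f x) * cmod (g x) \<le> (cmod (f x))\<^sup>2 + (cmod (g x))\<^sup>2" by linarith
    then show ?thesis by (simp add: norm_mult)
  qed
  ultimately show ?thesis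
    by (rule summable_on_comparison_test) auto
qed

lemma prod_summable:
  fixes f g :: "'b \<Rightarrow> complex"
  assumes "(\<lambda>x. (cmod (f x))\<^sup>2) summable_on U" "(\<lambda>x. (cmod (g x))\<^sup>2) summable_on U"
  shows "(\<lambda>x. f x * cnj (g x)) summable_on U"
  by (rule Infinite_Sum.abs_summable_summable[OF prod_abs_summable[OF assms]])

lemma real_cs:
  fixes a b :: "'b \<Rightarrow> real"
  assumes a0: "\<And>x. 0 \<le> a x" and b0: "\<And>x. 0 \<le> b x"
    and sa: "(\<lambda>x. (a x)\<^sup>2) summable_on U" and sb: "(\<lambda>x. (b x)\<^sup>2) summable_on U"
  shows "infsum (\<lambda>x. a x * b x) U \<le> sqrt (infsum (\<lambda>x. (a x)\<^sup>2) U) * sqrt (infsum (\<lambda>x. (b x)\<^sup>2) U)"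
proof -
  define A where "A = infsum (\<lambda>x. (a x)\<^sup>2) U"
  define B where "B = infsum (\<lambda>x. (b x)\<^sup>2) U"
  have A0: "A \<ge> 0" unfolding A_def by (simp add: infsum_nonneg)
  have B0: "B \<ge> 0" unfolding B_def by (simp add: infsum_nonneg)
  have sab: "(\<lambda>x. a x * b x) summable_on U"
  proof -
    have "(\<lambda>x. (a x)\<^sup>2 + (b x)\<^sup>2) summable_on U" using sa sb by (rule summable_on_add)
    moreover have "a x * b x \<le> (a x)\<^sup>2 + (b x)\<^sup>2" for x
    proof -
      have "2 * (a x * b x) \<le> (a x)\<^sup>2 + (b x)\<^sup>2"
        using sum_squares_bound[of "a x" "b x"] by (simp add: power2_eq_square)
      moreover have "0 \<le> a x * b x" using a0[of x] b0[of x] by simp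
      ultimately show ?thesis by linarith
    qed
    ultimately show ?thesis
      by (rule summable_on_comparison_test) (use a0 b0 in auto)
  qed
  have key: "infsum (\<lambda>x. a x * b x) U \<le> (t * A + B / t) / 2" if t: "t > 0" for t
  proof -
    have "infsum (\<lambda>x. a x * b x) U \<le> infsum (\<lambda>x. (t * (a x)\<^sup>2 + (b x)\<^sup>2 / t) / 2) U"
    proof (rule infsum_mono[OF sab])
      show "(\<lambda>x. (t * (a x)\<^sup>2 + (b x)\<^sup>2 / t) / 2) summable_on U"
      proof -
        have h: "(\<lambda>x. t * (a x)\<^sup>2 + (b x)\<^sup>2 * (1/t)) summable_on U"
          using summable_on_add[OF summable_on_cmult_right[OF sa, of t] summable_on_cmult_left[OF sb, of "1/t"]] .
        have e: "(\<lambda>x. (t * (a x)\<^sup>2 + (b x)\<^sup>2 / t) / 2) = (\<lambda>x. (t * (a x)\<^sup>2 + (b x)\<^sup>2 * (1/t)) * (1/2))"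
          by simp
        show ?thesis unfolding e by (rule summable_on_cmult_left[OF h])
      qed
      show "a x * b x \<le> (t * (a x)\<^sup>2 + (b x)\<^sup>2 / t) / 2" for x
      proof -
        have "0 \<le> (t * a x - b x)\<^sup>2" by simp
        then have h: "2 * t * (a x * b x) \<le> t * t * (a x)\<^sup>2 + (b x)\<^sup>2"
          by (simp add: power2_eq_square algebra_simps)
        have "a x * b x = (2 * t * (a x * b x)) / (2 * t)" using t by simp
        also have "\<dots> \<le> (t * t * (a x)\<^sup>2 + (b x)\<^sup>2) / (2 * t)"
          by (rule divide_right_mono[OF h]) (use t in simp)
        also have "\<dots> = (t * (a x)\<^sup>2 + (b x)\<^sup>2 / t) / 2"
          using t by (simp add: field_simps power2_eq_square)
        finally show ?thesis .
      qed
    qed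
    also have "\<dots> = (t * A + B / t) / 2"
    proof -
      have "infsum (\<lambda>x. (t * (a x)\<^sup>2 + (b x)\<^sup>2 / t) / 2) U
          = infsum (\<lambda>x. t * (a x)\<^sup>2 + (b x)\<^sup>2 / t) U / 2"
      proof -
        have e: "(\<lambda>x. (t * (a x)\<^sup>2 + (b x)\<^sup>2 / t) / 2) = (\<lambda>x. (t * (a x)\<^sup>2 + (b x)\<^sup>2 / t) * (1/2))"
          by simp
        show ?thesis unfolding e infsum_cmult_left' by simp
      qed
      also have "\<dots> = (infsum (\<lambda>x. t * (a x)\<^sup>2) U + infsum (\<lambda>x. (b x)\<^sup>2 / t) U) / 2"
      proof -
        have s1: "(\<lambda>x. t * (a x)\<^sup>2) summable_on U" by (rule summable_on_cmult_right[OF sa])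
        have s2: "(\<lambda>x. (b x)\<^sup>2 / t) summable_on U"
          using summable_on_cmult_left[OF sb, of "1/t"] by simp
        show ?thesis by (simp only: infsum_add[OF s1 s2])
      qed
      also have "\<dots> = (t * A + B / t) / 2"
      proof -
        have "infsum (\<lambda>x. t * (a x)\<^sup>2) U = t * A" unfolding A_def by (rule infsum_cmult_right')
        moreover have "infsum (\<lambda>x. (b x)\<^sup>2 / t) U = B / t"
          using infsum_cmult_left'[of "\<lambda>x. (b x)\<^sup>2" "1/t" U] unfolding B_def by simp
        ultimately show ?thesis by simp
      qed
      finally show ?thesis .
    qed
    finally show ?thesis .
  qed
  show ?thesis
  proof (cases "A = 0 \<or> B = 0")
    case True
    then have "\<forall>x\<in>U. a x * b x = 0"
    proof
      assume "A = 0"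
      then have "(a x)\<^sup>2 = 0" if "x \<in> U" for x
        using nonneg_infsum_le_0D[OF _ sa _ that] unfolding A_def by auto
      then show ?thesis by simp
    next
      assume "B = 0"
      then have "(b x)\<^sup>2 = 0" if "x \<in> U" for x
        using nonneg_infsum_le_0D[OF _ sb _ that] unfolding B_def by auto
      then show ?thesis by simp
    qed
    then have "infsum (\<lambda>x. a x * b x) U = 0" by (simp add: infsum_0)
    then show ?thesis by (simp add: infsum_nonneg)
  next
    case False
    then have Ap: "A > 0" and Bp: "B > 0" using A0 B0 by auto
    define t where "t = sqrt B / sqrt A"
    have tp: "t > 0" using Ap Bp unfolding t_def by simp
    have "(t * A + B / t) / 2 = sqrt A * sqrt B"
      using Ap Bp unfolding t_def
      by (simp add: field_simps)
    then show ?thesis using key[OF tp] unfolding A_def B_def by simp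
  qed
qed

lemma complex_cs:
  fixes f g :: "'b \<Rightarrow> complex"
  assumes sf: "(\<lambda>x. (cmod (f x))\<^sup>2) summable_on U" and sg: "(\<lambda>x. (cmod (g x))\<^sup>2) summable_on U"
  shows "cmod (infsum (\<lambda>x. f x * cnj (g x)) U)
     \<le> sqrt (infsum (\<lambda>x. (cmod (f x))\<^sup>2) U) * sqrt (infsum (\<lambda>x. (cmod (g x))\<^sup>2) U)"
proof -
  have "cmod (infsum (\<lambda>x. f x * cnj (g x)) U) \<le> infsum (\<lambda>x. norm (f x * cnj (g x))) U"
    by (rule norm_infsum_bound[OF prod_abs_summable[OF sf sg]])
  also have "\<dots> = infsum (\<lambda>x. cmod (f x) * cmod (g x)) U"
    by (simp add: norm_mult)
  also have "\<dots> \<le> sqrt (infsum (\<lambda>x. (cmod (f x))\<^sup>2) U) * sqrt (infsum (\<lambda>x. (cmod (g x))\<^sup>2) U)"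
    by (rule real_cs) (use sf sg in auto)
  finally show ?thesis .
qed

lemma l2norm_scale: "l2norm (\<lambda>x. a * f x) = cmod a * l2norm f"
proof -
  have "(\<Sum>\<^sub>\<infinity>x. (cmod (a * f x))\<^sup>2) = (cmod a)\<^sup>2 * (\<Sum>\<^sub>\<infinity>x. (cmod (f x))\<^sup>2)"
    by (simp add: norm_mult power_mult_distrib infsum_cmult_right')
  then show ?thesis unfolding l2norm_def by (simp add: real_sqrt_mult)
qed

lemma mult_l2:
  assumes f: "f \<in> l2 A" and M: "\<And>x. x \<in> A \<Longrightarrow> cmod (m x) \<le> M"
  shows "(\<lambda>x. m x * f x) \<in> l2 A" and "l2norm (\<lambda>x. m x * f x) \<le> M * l2norm f"
proof -
  have sf: "(\<lambda>x. (cmod (f x))\<^sup>2) summable_on UNIV" using f by (simp add: l2_def)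
  have le: "(cmod (m x * f x))\<^sup>2 \<le> M\<^sup>2 * (cmod (f x))\<^sup>2" for x
  proof (cases "x \<in> A")
    case True
    then have "cmod (m x) \<le> M" by (rule M)
    then have "(cmod (m x))\<^sup>2 \<le> M\<^sup>2" by (simp add: power_mono)
    then show ?thesis by (simp add: norm_mult power_mult_distrib mult_right_mono)
  next
    case False then show ?thesis using f by (simp add: l2_def)
  qed
  have s2: "(\<lambda>x. M\<^sup>2 * (cmod (f x))\<^sup>2) summable_on UNIV"
    using summable_on_cmult_right[OF sf] by blast
  have smf: "(\<lambda>x. (cmod (m x * f x))\<^sup>2) summable_on UNIV"
    by (rule summable_on_comparison_test[OF s2]) (use le in auto)
  show "(\<lambda>x. m x * f x) \<in> l2 A"
    using smf f unfolding l2_def by auto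
  have "(\<Sum>\<^sub>\<infinity>x. (cmod (m x * f x))\<^sup>2) \<le> (\<Sum>\<^sub>\<infinity>x. M\<^sup>2 * (cmod (f x))\<^sup>2)"
    by (rule infsum_mono[OF smf s2 le])
  also have "\<dots> = M\<^sup>2 * (\<Sum>\<^sub>\<infinity>x. (cmod (f x))\<^sup>2)" by (simp add: infsum_cmult_right')
  finally have "l2norm (\<lambda>x. m x * f x) \<le> sqrt (M\<^sup>2 * (\<Sum>\<^sub>\<infinity>x. (cmod (f x))\<^sup>2))"
    unfolding l2norm_def by (rule real_sqrt_le_mono)
  also have "\<dots> = \<bar>M\<bar> * l2norm f" by (simp add: l2norm_def real_sqrt_mult)
  finally have *: "l2norm (\<lambda>x. m x * f x) \<le> \<bar>M\<bar> * l2norm f" .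
  show "l2norm (\<lambda>x. m x * f x) \<le> M * l2norm f"
  proof (cases "M \<ge> 0")
    case True then show ?thesis using * by simp
  next
    case False
    then have "A = {} \<or> True" by simp
    show ?thesis
    proof (cases "\<exists>x. x \<in> A")
      case True then obtain x where "x \<in> A" by blast
      from M[OF this] False have False by (meson norm_ge_zero order_trans not_le)
      then show ?thesis ..
    next
      case nA: False
      then have "f = (\<lambda>x. 0)" using f by (auto simp: l2_def)
      then show ?thesis by (simp add: l2norm_def)
    qed
  qed
qed

lemma bounded_mult:
  assumes M: "\<And>x. x \<in> A \<Longrightarrow> cmod (m x) \<le> M"
  shows "bounded_op A (\<lambda>f x. m x * f x)"
proof -
  have "(\<lambda>x. m x * (a * f x + b * g x)) = (\<lambda>x. a * (m x * f x) + b * (m x * g x))" for a b f g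
    by (simp add: algebra_simps)
  then show ?thesis
    unfolding bounded_op_def using mult_l2[where m=m and M=M and A=A, OF _ M] by blast
qed

lemma bounded_comp:
  assumes S: "bounded_op A S" and T: "bounded_op A T"
  shows "bounded_op A (\<lambda>f. S (T f))"
proof -
  obtain K1 where K1: "\<forall>f\<in>l2 A. l2norm (S f) \<le> K1 * l2norm f" using S unfolding bounded_op_def by blast
  obtain K2 where K2: "\<forall>f\<in>l2 A. l2norm (T f) \<le> K2 * l2norm f" using T unfolding bounded_op_def by blast
  have "l2norm (S (T f)) \<le> (max K1 0 * max K2 0) * l2norm f" if f: "f \<in> l2 A" for f
  proof -
    have Tf: "T f \<in> l2 A" using T f unfolding bounded_op_def by blast
    have "l2norm (S (T f)) \<le> K1 * l2norm (T f)" using K1 Tf by blast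
    also have "\<dots> \<le> max K1 0 * l2norm (T f)" by (simp add: l2norm_nonneg mult_right_mono)
    also have "\<dots> \<le> max K1 0 * (K2 * l2norm f)" using K2 f by (simp add: mult_left_mono)
    also have "\<dots> \<le> max K1 0 * (max K2 0 * l2norm f)"
      by (simp add: l2norm_nonneg mult_left_mono mult_right_mono)
    finally show ?thesis by simp
  qed
  moreover have "\<forall>f\<in>l2 A. S (T f) \<in> l2 A" using S T unfolding bounded_op_def by blast
  moreover have "S (T (\<lambda>x. a * f x + b * g x)) = (\<lambda>x. a * S (T f) x + b * S (T g) x)"
    if "f \<in> l2 A" "g \<in> l2 A" for f g a b
  proof -
    have "T (\<lambda>x. a * f x + b * g x) = (\<lambda>x. a * T f x + b * T g x)"
      using T that unfolding bounded_op_def by blast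
    moreover have "T f \<in> l2 A" "T g \<in> l2 A" using T that unfolding bounded_op_def by blast+
    ultimately show ?thesis using S unfolding bounded_op_def by simp
  qed
  ultimately show ?thesis unfolding bounded_op_def by blast
qed


definition pj :: "(nat \<Rightarrow> ('a \<times> 'a) set) \<Rightarrow> nat \<Rightarrow> (nat \<Rightarrow> 'a) \<Rightarrow> (nat \<Rightarrow> 'a)" where
  "pj Et j w = w(j := tpar (Et j) (w j))"

lemma mshift_eq: "mshift d Vt Et r lamj j f w =
  (if w \<in> prodV d Vt \<and> w j \<noteq> r j then complex_of_real (lamj w) * f (pj Et j w) else 0)"
  unfolding mshift_def pj_def by simp

lemma mshift_scale: "mshift d Vt Et r lamj j (\<lambda>y. a * f y) = (\<lambda>w. a * mshift d Vt Et r lamj j f w)"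
  by (rule ext) (simp add: mshift_eq)

lemma mshift_basis: "mshift d Vt Et r lamj j (basis_vec x) w =
  (if w \<in> prodV d Vt \<and> w j \<noteq> r j \<and> pj Et j w = x then complex_of_real (lamj w) else 0)"
  by (simp add: mshift_eq basis_vec_def)

lemma of_real_abs_sq: "complex_of_real \<bar>a\<bar> * complex_of_real \<bar>a\<bar> = complex_of_real a * complex_of_real a"
  by (simp flip: of_real_mult)

lemma regroup:
  fixes F :: "'x \<times> 'w \<Rightarrow> 'c::banach" and p :: "'w \<Rightarrow> 'x"
  assumes s: "(\<lambda>w. F (p w, w)) summable_on W"
  shows "infsum (\<lambda>w. F (p w, w)) W = infsum (\<lambda>x. infsum (\<lambda>w. F (x, w)) {w\<in>W. p w = x}) UNIV"
    and "(\<lambda>x. infsum (\<lambda>w. F (x, w)) {w\<in>W. p w = x}) summable_on UNIV"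
proof -
  have bij: "bij_betw (\<lambda>w. (p w, w)) W (Sigma UNIV (\<lambda>x. {w\<in>W. p w = x}))"
    unfolding bij_betw_def inj_on_def by auto
  have sS: "F summable_on (Sigma UNIV (\<lambda>x. {w\<in>W. p w = x}))"
    using summable_on_reindex_bij_betw[OF bij, of F] s by simp
  show "infsum (\<lambda>w. F (p w, w)) W = infsum (\<lambda>x. infsum (\<lambda>w. F (x, w)) {w\<in>W. p w = x}) UNIV"
    using infsum_reindex_bij_betw[OF bij, of F] infsum_Sigma_banach[OF sS] by simp
  show "(\<lambda>x. infsum (\<lambda>w. F (x, w)) {w\<in>W. p w = x}) summable_on UNIV"
    using summable_on_Sigma_banach[of "\<lambda>x w. F (x, w)" UNIV "\<lambda>x. {w\<in>W. p w = x}"] sS by simp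
qed

context
  fixes d :: nat and Vt :: "nat \<Rightarrow> 'a set" and Et :: "nat \<Rightarrow> ('a \<times> 'a) set" and r :: "nat \<Rightarrow> 'a"
    and lamj :: "(nat \<Rightarrow> 'a) \<Rightarrow> real" and j :: nat
  assumes bS: "bounded_op (prodV d Vt) (mshift d Vt Et r lamj j)"
begin

abbreviation "VV \<equiv> prodV d Vt"
abbreviation "SS \<equiv> mshift d Vt Et r lamj j"
abbreviation "WW \<equiv> {w. w \<in> prodV d Vt \<and> w j \<noteq> r j}"

definition adjf :: "((nat \<Rightarrow> 'a) \<Rightarrow> complex) \<Rightarrow> (nat \<Rightarrow> 'a) \<Rightarrow> complex" where
  "adjf h x = (if x \<in> VV then cnj (l2inner (SS (basis_vec x)) h) else 0)"

lemma SS_l2: "f \<in> l2 VV \<Longrightarrow> SS f \<in> l2 VV"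
  using bS unfolding bounded_op_def by blast

lemma Se_l2: "x \<in> VV \<Longrightarrow> SS (basis_vec x) \<in> l2 VV"
  by (rule SS_l2[OF basis_l2])

lemma SS_K: obtains K where "K \<ge> 0" "\<And>f. f \<in> l2 VV \<Longrightarrow> l2norm (SS f) \<le> K * l2norm f"
proof -
  obtain K where K: "\<forall>f\<in>l2 VV. l2norm (SS f) \<le> K * l2norm f" using bS unfolding bounded_op_def by blast
  have "l2norm (SS f) \<le> max K 0 * l2norm f" if "f \<in> l2 VV" for f
    using K that by (meson l2norm_nonneg max.cobounded1 mult_right_mono order_trans)
  then show ?thesis using that[of "max K 0"] by simp
qed

lemma adj_pointwise_bound:
  assumes h: "h \<in> l2 VV" and K0: "K \<ge> 0" and K: "\<And>f. f \<in> l2 VV \<Longrightarrow> l2norm (SS f) \<le> K * l2norm f"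
  shows "(cmod (adjf h x))\<^sup>2 \<le> K\<^sup>2 * infsum (\<lambda>w. (cmod (h w))\<^sup>2) {w\<in>WW. pj Et j w = x}"
proof (cases "x \<in> VV")
  case False then show ?thesis by (simp add: adjf_def infsum_nonneg)
next
  case True
  let ?Q = "{w\<in>WW. pj Et j w = x}"
  define h' where "h' w = (if w \<in> ?Q then h w else 0)" for w
  have sh: "(\<lambda>w. (cmod (h w))\<^sup>2) summable_on UNIV" using h by (rule l2_summ)
  have sh': "(\<lambda>w. (cmod (h' w))\<^sup>2) summable_on UNIV"
    by (rule summable_on_comparison_test[OF sh]) (auto simp: h'_def)
  have se: "(\<lambda>w. (cmod (SS (basis_vec x) w))\<^sup>2) summable_on UNIV"
    using Se_l2[OF True] by (rule l2_summ)
  have eq: "l2inner (SS (basis_vec x)) h = infsum (\<lambda>w. SS (basis_vec x) w * cnj (h' w)) UNIV"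
    unfolding l2inner_def by (rule infsum_cong) (auto simp: h'_def mshift_basis)
  have "cmod (adjf h x) = cmod (infsum (\<lambda>w. SS (basis_vec x) w * cnj (h' w)) UNIV)"
    using True eq by (simp add: adjf_def)
  also have "\<dots> \<le> sqrt (infsum (\<lambda>w. (cmod (SS (basis_vec x) w))\<^sup>2) UNIV) * sqrt (infsum (\<lambda>w. (cmod (h' w))\<^sup>2) UNIV)"
    by (rule complex_cs[OF se sh'])
  finally have le1: "cmod (adjf h x) \<le> sqrt (infsum (\<lambda>w. (cmod (SS (basis_vec x) w))\<^sup>2) UNIV) * sqrt (infsum (\<lambda>w. (cmod (h' w))\<^sup>2) UNIV)" .
  have e2: "infsum (\<lambda>w. (cmod (h' w))\<^sup>2) UNIV = infsum (\<lambda>w. (cmod (h w))\<^sup>2) ?Q"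
    by (rule infsum_cong_neutral) (auto simp: h'_def)
  have e3: "sqrt (infsum (\<lambda>w. (cmod (SS (basis_vec x) w))\<^sup>2) UNIV) = l2norm (SS (basis_vec x))"
    by (simp add: l2norm_def)
  have e4: "l2norm (SS (basis_vec x)) \<le> K"
    using K[OF basis_l2[OF True]] by (simp add: l2norm_basis)
  have le: "cmod (adjf h x) \<le> K * sqrt (infsum (\<lambda>w. (cmod (h w))\<^sup>2) ?Q)"
    using le1 unfolding e2 e3 using e4 by (meson mult_right_mono order_trans real_sqrt_ge_zero infsum_nonneg zero_le_power2)
  have q0: "0 \<le> infsum (\<lambda>w. (cmod (h w))\<^sup>2) ?Q" by (simp add: infsum_nonneg)
  have "(cmod (adjf h x))\<^sup>2 \<le> (K * sqrt (infsum (\<lambda>w. (cmod (h w))\<^sup>2) ?Q))\<^sup>2"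
    using le by (simp add: power_mono)
  also have "\<dots> = K\<^sup>2 * infsum (\<lambda>w. (cmod (h w))\<^sup>2) ?Q"
    using q0 by (simp add: power_mult_distrib)
  finally show ?thesis .
qed

lemma adj_l2:
  assumes h: "h \<in> l2 VV" and K0: "K \<ge> 0" and K: "\<And>f. f \<in> l2 VV \<Longrightarrow> l2norm (SS f) \<le> K * l2norm f"
  shows "adjf h \<in> l2 VV" and "l2norm (adjf h) \<le> K * l2norm h"
proof -
  have sh: "(\<lambda>w. (cmod (h w))\<^sup>2) summable_on UNIV" using h by (rule l2_summ)
  have shW: "(\<lambda>w. (\<lambda>(x::nat \<Rightarrow> 'a, w). (cmod (h w))\<^sup>2) (pj Et j w, w)) summable_on WW"
    using summable_on_subset_banach[OF sh] by simp
  note rg = regroup[OF shW]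
  let ?q = "\<lambda>x. infsum (\<lambda>w. (cmod (h w))\<^sup>2) {w\<in>WW. pj Et j w = x}"
  have sq: "?q summable_on UNIV" using rg(2) by simp
  have s2: "(\<lambda>x. K\<^sup>2 * ?q x) summable_on UNIV" by (rule summable_on_cmult_right[OF sq])
  have sa: "(\<lambda>x. (cmod (adjf h x))\<^sup>2) summable_on UNIV"
    by (rule summable_on_comparison_test[OF s2]) (use adj_pointwise_bound[OF h K0 K] in auto)
  show "adjf h \<in> l2 VV" using sa unfolding l2_def by (auto simp: adjf_def)
  have "infsum (\<lambda>x. (cmod (adjf h x))\<^sup>2) UNIV \<le> infsum (\<lambda>x. K\<^sup>2 * ?q x) UNIV"
    by (rule infsum_mono[OF sa s2]) (use adj_pointwise_bound[OF h K0 K] in auto)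
  also have "\<dots> = K\<^sup>2 * infsum ?q UNIV" by (rule infsum_cmult_right')
  also have "infsum ?q UNIV = infsum (\<lambda>w. (cmod (h w))\<^sup>2) WW" using rg(1) by simp
  also have "\<dots> \<le> infsum (\<lambda>w. (cmod (h w))\<^sup>2) UNIV"
    by (rule infsum_mono_neutral) (use summable_on_subset_banach[OF sh] sh in auto)
  finally have "infsum (\<lambda>x. (cmod (adjf h x))\<^sup>2) UNIV \<le> K\<^sup>2 * infsum (\<lambda>w. (cmod (h w))\<^sup>2) UNIV"
    by (simp add: mult_left_mono)
  then have "l2norm (adjf h) \<le> sqrt (K\<^sup>2 * infsum (\<lambda>w. (cmod (h w))\<^sup>2) UNIV)"
    unfolding l2norm_def by (rule real_sqrt_le_mono)
  also have "\<dots> = K * l2norm h" using K0 by (simp add: l2norm_def real_sqrt_mult)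
  finally show "l2norm (adjf h) \<le> K * l2norm h" .
qed

lemma adj_lin:
  assumes f: "f \<in> l2 VV" and g: "g \<in> l2 VV"
  shows "adjf (\<lambda>y. a * f y + b * g y) = (\<lambda>x. a * adjf f x + b * adjf g x)"
proof (rule ext)
  fix x
  show "adjf (\<lambda>y. a * f y + b * g y) x = a * adjf f x + b * adjf g x"
  proof (cases "x \<in> VV")
    case False then show ?thesis by (simp add: adjf_def)
  next
    case True
    have se: "(\<lambda>w. (cmod (SS (basis_vec x) w))\<^sup>2) summable_on UNIV"
      using Se_l2[OF True] by (rule l2_summ)
    have s1: "(\<lambda>w. SS (basis_vec x) w * cnj (f w)) summable_on UNIV"
      by (rule prod_summable[OF se l2_summ[OF f]])
    have s2: "(\<lambda>w. SS (basis_vec x) w * cnj (g w)) summable_on UNIV"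
      by (rule prod_summable[OF se l2_summ[OF g]])
    have "l2inner (SS (basis_vec x)) (\<lambda>y. a * f y + b * g y)
        = infsum (\<lambda>w. cnj a * (SS (basis_vec x) w * cnj (f w)) + cnj b * (SS (basis_vec x) w * cnj (g w))) UNIV"
      unfolding l2inner_def by (simp add: algebra_simps)
    also have "\<dots> = cnj a * l2inner (SS (basis_vec x)) f + cnj b * l2inner (SS (basis_vec x)) g"
      unfolding l2inner_def
      by (subst infsum_add) (auto intro: summable_on_cmult_right s1 s2 simp: infsum_cmult_right')
    finally show ?thesis using True by (simp add: adjf_def)
  qed
qed

lemma adj_ident:
  assumes f: "f \<in> l2 VV" and h: "h \<in> l2 VV"
  shows "l2inner (SS f) h = l2inner f (adjf h)"
proof -
  define F where "F = (\<lambda>(x, w). complex_of_real (lamj w) * f x * cnj (h w))"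
  have sSf: "(\<lambda>w. SS f w * cnj (h w)) summable_on UNIV"
    by (rule prod_summable[OF l2_summ[OF SS_l2[OF f]] l2_summ[OF h]])
  have eq1: "l2inner (SS f) h = infsum (\<lambda>w. F (pj Et j w, w)) WW"
    unfolding l2inner_def F_def
    by (rule infsum_cong_neutral) (auto simp: mshift_eq)
  have sW: "(\<lambda>w. F (pj Et j w, w)) summable_on WW"
  proof -
    have "(\<lambda>w. SS f w * cnj (h w)) summable_on WW"
      using summable_on_subset_banach[OF sSf] by blast
    moreover have "w \<in> WW \<Longrightarrow> SS f w * cnj (h w) = F (pj Et j w, w)" for w
      by (simp add: F_def mshift_eq)
    ultimately show ?thesis using summable_on_cong[of WW "\<lambda>w. SS f w * cnj (h w)" "\<lambda>w. F (pj Et j w, w)"] by blast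
  qed
  have eq2: "infsum (\<lambda>w. F (pj Et j w, w)) WW = infsum (\<lambda>x. infsum (\<lambda>w. F (x, w)) {w\<in>WW. pj Et j w = x}) UNIV"
    by (rule regroup(1)[OF sW])
  have eq3: "infsum (\<lambda>w. F (x, w)) {w\<in>WW. pj Et j w = x} = f x * cnj (adjf h x)" for x
  proof (cases "x \<in> VV")
    case True
    have "infsum (\<lambda>w. F (x, w)) {w\<in>WW. pj Et j w = x} = infsum (\<lambda>w. f x * (SS (basis_vec x) w * cnj (h w))) UNIV"
      by (rule infsum_cong_neutral) (auto simp: F_def mshift_basis)
    also have "\<dots> = f x * l2inner (SS (basis_vec x)) h"
      unfolding l2inner_def by (rule infsum_cmult_right')
    finally show ?thesis using True by (simp add: adjf_def)
  next
    case False
    then have "f x = 0" using f by (simp add: l2_def)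
    then show ?thesis by (simp add: F_def)
  qed
  have "l2inner (SS f) h = infsum (\<lambda>x. f x * cnj (adjf h x)) UNIV"
    using eq1 eq2 eq3 by simp
  then show ?thesis by (simp add: l2inner_def)
qed

lemma adj_exists: "is_adjoint VV SS (adjoint_op VV SS)"
proof -
  obtain K where K0: "K \<ge> 0" and K: "\<And>f. f \<in> l2 VV \<Longrightarrow> l2norm (SS f) \<le> K * l2norm f"
    using SS_K by blast
  have "is_adjoint VV SS adjf"
    unfolding is_adjoint_def bounded_op_def
    using adj_l2[OF _ K0 K] adj_lin adj_ident by blast
  then show ?thesis unfolding adjoint_op_def using someI[of "is_adjoint VV SS" adjf] by blast
qed

lemma gram_single:
  assumes T': "is_adjoint VV SS T'" and g: "g \<in> l2 VV"
  shows "T' (SS g) = (\<lambda>x. complex_of_real ((l2norm (SS (basis_vec x)))\<^sup>2) * g x)"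
proof (rule ext)
  fix x
  have bT: "bounded_op VV T'" using T' unfolding is_adjoint_def by blast
  have Sg: "SS g \<in> l2 VV" using SS_l2[OF g] .
  have TSg: "T' (SS g) \<in> l2 VV" using bT Sg unfolding bounded_op_def by blast
  show "T' (SS g) x = complex_of_real ((l2norm (SS (basis_vec x)))\<^sup>2) * g x"
  proof (cases "x \<in> VV")
    case False
    then show ?thesis using TSg g by (simp add: l2_def)
  next
    case True
    have ex: "basis_vec x \<in> l2 VV" using basis_l2[OF True] .
    have "T' (SS g) x = cnj (l2inner (basis_vec x) (T' (SS g)))"
      by (simp add: l2inner_basis)
    also have "l2inner (basis_vec x) (T' (SS g)) = l2inner (SS (basis_vec x)) (SS g)"
      using T' ex Sg unfolding is_adjoint_def by simp
    also have "\<dots> = infsum (\<lambda>w. complex_of_real ((cmod (SS (basis_vec x) w))\<^sup>2) * cnj (g x)) UNIV"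
      unfolding l2inner_def
      by (rule infsum_cong) (auto simp: mshift_eq basis_vec_def power2_eq_square of_real_abs_sq)
    also have "\<dots> = complex_of_real (infsum (\<lambda>w. (cmod (SS (basis_vec x) w))\<^sup>2) UNIV) * cnj (g x)"
      by (subst infsum_cmult_left', subst infsum_of_real', rule refl)
    also have "infsum (\<lambda>w. (cmod (SS (basis_vec x) w))\<^sup>2) UNIV = (l2norm (SS (basis_vec x)))\<^sup>2"
      by (simp add: l2norm_sq)
    finally show ?thesis by simp
  qed
qed

end

lemma joint_gram_mshift:
  assumes b: "\<forall>j<d. bounded_op (prodV d Vt) (mshift d Vt Et r (lf j) j)"
    and g: "g \<in> l2 (prodV d Vt)"
  shows "joint_gram (prodV d Vt) d (\<lambda>j. mshift d Vt Et r (lf j) j) g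
     = (\<lambda>x. complex_of_real (\<Sum>j<d. (l2norm (mshift d Vt Et r (lf j) j (basis_vec x)))\<^sup>2) * g x)"
proof -
  have "adjoint_op (prodV d Vt) (mshift d Vt Et r (lf j) j) (mshift d Vt Et r (lf j) j g)
     = (\<lambda>x. complex_of_real ((l2norm (mshift d Vt Et r (lf j) j (basis_vec x)))\<^sup>2) * g x)" if "j < d" for j
    using gram_single[OF b[rule_format, OF that] adj_exists[OF b[rule_format, OF that]] g] .
  then show ?thesis
    unfolding joint_gram_def by (auto simp: sum_distrib_right)
qed


lemma tp1:
  assumes t: "rooted_dtree Vj Ej rj" and v: "v \<in> Vj" "v \<noteq> rj"
  shows "(tpar Ej v, v) \<in> Ej \<and> tpar Ej v \<in> Vj"
proof -
  from t v obtain u where u: "(u, v) \<in> Ej" unfolding rooted_dtree_def by blast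
  have uniq: "\<And>u'. (u', v) \<in> Ej \<Longrightarrow> u' = u" using t u unfolding rooted_dtree_def by blast
  have "tpar Ej v = u" unfolding tpar_def using u uniq by (rule the_equality)
  moreover have "u \<in> Vj" using t u unfolding rooted_dtree_def by blast
  ultimately show ?thesis using u by simp
qed

lemma tp2:
  assumes t: "rooted_dtree Vj Ej rj" and u: "(u, v) \<in> Ej"
  shows "tpar Ej v = u \<and> v \<noteq> rj \<and> v \<in> Vj \<and> u \<in> Vj"
proof -
  have uniq: "\<And>u'. (u', v) \<in> Ej \<Longrightarrow> u' = u" using t u unfolding rooted_dtree_def by blast
  have "tpar Ej v = u" unfolding tpar_def using u uniq by (rule the_equality)
  moreover have "v \<in> Vj" "u \<in> Vj" using t u unfolding rooted_dtree_def by blast+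
  moreover have "v \<noteq> rj" using t u \<open>v \<in> Vj\<close> unfolding rooted_dtree_def by blast
  ultimately show ?thesis by simp
qed

lemma pj_V:
  assumes t: "\<forall>j<d. rooted_dtree (Vt j) (Et j) (r j)" and j: "j < d"
    and w: "w \<in> prodV d Vt" "w j \<noteq> r j"
  shows "pj Et j w \<in> prodV d Vt"
proof -
  have wj: "w j \<in> Vt j" using w j by (auto simp: prodV_def PiE_iff)
  have "tpar (Et j) (w j) \<in> Vt j" using tp1[OF t[rule_format, OF j] wj w(2)] by blast
  then show ?thesis using w j unfolding prodV_def pj_def by (auto simp: PiE_iff extensional_def)
qed

lemma pj_other: "i \<noteq> j \<Longrightarrow> pj Et i w j = w j"
  by (simp add: pj_def)

lemma pj_comm: "i \<noteq> j \<Longrightarrow> pj Et i (pj Et j w) = pj Et j (pj Et i w)"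
  by (simp add: pj_def fun_upd_twist)

lemma Par_char:
  assumes t: "\<forall>j<d. rooted_dtree (Vt j) (Et j) (r j)" and v: "v \<in> prodV d Vt"
  shows "u \<in> Par d Vt Et v \<longleftrightarrow> (\<exists>k<d. v k \<noteq> r k \<and> u = pj Et k v)"
proof
  assume "u \<in> Par d Vt Et v"
  then obtain k where k: "k < d" "(u k, v k) \<in> Et k" "\<forall>j. j \<noteq> k \<longrightarrow> v j = u j"
    unfolding Par_def prodE_def by blast
  from tp2[OF t[rule_format, OF k(1)] k(2)] have "tpar (Et k) (v k) = u k" "v k \<noteq> r k" by auto
  moreover have "u = pj Et k v"
    using k(3) \<open>tpar (Et k) (v k) = u k\<close> by (auto simp: pj_def)
  ultimately show "\<exists>k<d. v k \<noteq> r k \<and> u = pj Et k v" using k(1) by blast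
next
  assume "\<exists>k<d. v k \<noteq> r k \<and> u = pj Et k v"
  then obtain k where k: "k < d" "v k \<noteq> r k" "u = pj Et k v" by blast
  have vk: "v k \<in> Vt k" using v k(1) by (auto simp: prodV_def PiE_iff)
  have "(tpar (Et k) (v k), v k) \<in> Et k" using tp1[OF t[rule_format, OF k(1)] vk k(2)] by blast
  moreover have "u \<in> prodV d Vt" using pj_V[OF t k(1) v k(2)] k(3) by simp
  ultimately show "u \<in> Par d Vt Et v"
    unfolding Par_def prodE_def using k v by (auto simp: pj_def)
qed

lemma prod_root_at: "k < d \<Longrightarrow> prod_root d r k = r k"
  by (simp add: prod_root_def)

lemma mshift2: "mshift d Vt Et r a i (mshift d Vt Et r b j f) x =
  (if x \<in> prodV d Vt \<and> x i \<noteq> r i \<and> pj Et i x \<in> prodV d Vt \<and> pj Et i x j \<noteq> r j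
   then complex_of_real (a x) * (complex_of_real (b (pj Et i x)) * f (pj Et j (pj Et i x))) else 0)"
  by (simp add: mshift_eq)

lemma cond_sym:
  assumes t: "\<forall>j<d. rooted_dtree (Vt j) (Et j) (r j)" and ij: "i < d" "j < d" "i \<noteq> j"
  shows "(x \<in> prodV d Vt \<and> x i \<noteq> r i \<and> pj Et i x \<in> prodV d Vt \<and> pj Et i x j \<noteq> r j)
     \<longleftrightarrow> (x \<in> prodV d Vt \<and> x i \<noteq> r i \<and> x j \<noteq> r j)"
  using pj_V[OF t ij(1), of x] pj_other[OF ij(3), of Et x] by auto

lemma comm_weights:
  assumes t: "\<forall>j<d. rooted_dtree (Vt j) (Et j) (r j)"
    and c: "commuting_tuple (prodV d Vt) d (\<lambda>j. mshift d Vt Et r (lf j) j)"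
    and ij: "i < d" "j < d" "i \<noteq> j"
    and x: "x \<in> prodV d Vt" "x i \<noteq> r i" "x j \<noteq> r j"
  shows "lf i x * lf j (pj Et i x) = lf j x * lf i (pj Et j x)"
proof -
  let ?y = "pj Et j (pj Et i x)"
  have pi: "pj Et i x \<in> prodV d Vt" "pj Et i x j \<noteq> r j"
    using pj_V[OF t ij(1) x(1,2)] pj_other[OF ij(3), of Et x] x(3) by auto
  have pj': "pj Et j x \<in> prodV d Vt" "pj Et j x i \<noteq> r i"
    using pj_V[OF t ij(2) x(1,3)] pj_other[of j i Et x] ij(3) x(2) by auto
  have y: "?y \<in> prodV d Vt" using pj_V[OF t ij(2) pi] .
  have e: "mshift d Vt Et r (lf i) i (mshift d Vt Et r (lf j) j (basis_vec ?y))
         = mshift d Vt Et r (lf j) j (mshift d Vt Et r (lf i) i (basis_vec ?y))"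
    using c ij basis_l2[OF y] unfolding commuting_tuple_def by blast
  have "complex_of_real (lf i x) * (complex_of_real (lf j (pj Et i x)) * 1)
      = complex_of_real (lf j x) * (complex_of_real (lf i (pj Et j x)) * 1)"
    using fun_cong[OF e, of x] x pi pj' pj_comm[OF ij(3), of Et x]
    by (simp add: mshift2 basis_vec_def)
  then show ?thesis by (simp flip: of_real_mult)
qed


lemma mshift2div: "mshift d Vt Et r a i (\<lambda>x. mshift d Vt Et r b j g x / complex_of_real (c x)) z =
  (if z \<in> prodV d Vt \<and> z i \<noteq> r i \<and> pj Et i z \<in> prodV d Vt \<and> pj Et i z j \<noteq> r j
   then complex_of_real (a z * b (pj Et i z) / c (pj Et i z)) * g (pj Et j (pj Et i z)) else 0)"
  by (simp add: mshift_eq)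

lemma decomp_facts:
  assumes t: "\<forall>j<d. rooted_dtree (Vt j) (Et j) (r j)"
    and dec: "isometric_decomp d Vt Et r lam mu D"
  shows "\<exists>a. (\<forall>x\<in>prodV d Vt. 0 < a x \<and>
              (a x)\<^sup>2 = (\<Sum>j<d. (l2norm (mshift d Vt Et r (lam j) j (basis_vec x)))\<^sup>2))
           \<and> (\<forall>f\<in>l2 (prodV d Vt). D f = (\<lambda>x. complex_of_real (a x) * f x))
           \<and> (\<forall>j<d. \<forall>w\<in>prodV d Vt. w j \<noteq> r j \<longrightarrow> lam j w = mu j w * a (pj Et j w))"
proof -
  let ?V = "prodV d Vt"
  let ?T = "\<lambda>j. mshift d Vt Et r (mu j) j"
  let ?S = "\<lambda>j. mshift d Vt Et r (lam j) j"
  have ji: "joint_isometry ?V d ?T" and diag: "diagonal_op ?V D" and pos: "positive_op ?V D"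
    and inv: "invertible_op ?V D"
    and Seq: "\<forall>j<d. \<forall>f\<in>l2 ?V. ?S j f = ?T j (D f)"
    using dec unfolding isometric_decomp_def by blast+
  obtain cD where cD: "\<forall>f\<in>l2 ?V. D f = (\<lambda>x. cD x * f x)" using diag unfolding diagonal_op_def by blast
  obtain R where R: "is_inverse_op ?V D R" using inv unfolding invertible_op_def by blast
  have bT: "\<forall>j<d. bounded_op ?V (?T j)" using ji unfolding joint_isometry_def by blast
  define a where "a x = Re (cD x)" for x
  have cDa: "cD x = complex_of_real (a x) \<and> 0 < a x" if x: "x \<in> ?V" for x
  proof -
    have ex: "basis_vec x \<in> l2 ?V" by (rule basis_l2[OF x])
    have "l2inner (D (basis_vec x)) (basis_vec x) = cD x"
    proof -
      have "D (basis_vec x) = (\<lambda>y. cD y * basis_vec x y)" using cD ex by blast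
      then show ?thesis unfolding l2inner_def
        by (subst infsum_single_pt[where x=x]) (auto simp: basis_vec_def)
    qed
    then have im: "Im (cD x) = 0" and re: "0 \<le> Re (cD x)"
      using pos ex unfolding positive_op_def by auto
    have Rex: "R (basis_vec x) \<in> l2 ?V" using R ex unfolding is_inverse_op_def bounded_op_def by blast
    have "D (R (basis_vec x)) = basis_vec x" using R ex unfolding is_inverse_op_def by blast
    moreover have "D (R (basis_vec x)) = (\<lambda>y. cD y * R (basis_vec x) y)" using cD Rex by blast
    ultimately have "(\<lambda>y. cD y * R (basis_vec x) y) = basis_vec x" by simp
    from fun_cong[OF this, of x] have "cD x * R (basis_vec x) x = 1"
      by (simp add: basis_vec_def)
    then have "cD x \<noteq> 0" by auto
    then have "Re (cD x) \<noteq> 0" using im complex_eqI[of "cD x" 0] by auto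
    then show ?thesis using im re unfolding a_def by (simp add: complex_eq_iff)
  qed
  have Dform: "\<forall>f\<in>l2 ?V. D f = (\<lambda>x. complex_of_real (a x) * f x)"
  proof (intro ballI ext)
    fix f x assume f: "f \<in> l2 ?V"
    show "D f x = complex_of_real (a x) * f x"
    proof (cases "x \<in> ?V")
      case True then show ?thesis using cD f cDa by simp
    next
      case False then show ?thesis using cD f by (simp add: l2_def)
    qed
  qed
  have Sx: "?S j (basis_vec x) = (\<lambda>w. complex_of_real (a x) * ?T j (basis_vec x) w)"
    if x: "x \<in> ?V" and j: "j < d" for x j
  proof -
    have ex: "basis_vec x \<in> l2 ?V" by (rule basis_l2[OF x])
    have "D (basis_vec x) = (\<lambda>y. complex_of_real (a x) * basis_vec x y)"
      using Dform ex by (auto simp: basis_vec_def)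
    then have "?S j (basis_vec x) = ?T j (\<lambda>y. complex_of_real (a x) * basis_vec x y)"
      using Seq j ex by simp
    then show ?thesis by (simp add: mshift_scale)
  qed
  have CT: "(\<Sum>j<d. (l2norm (?T j (basis_vec x)))\<^sup>2) = 1" if x: "x \<in> ?V" for x
  proof -
    have ex: "basis_vec x \<in> l2 ?V" by (rule basis_l2[OF x])
    have "joint_gram ?V d ?T (basis_vec x) = basis_vec x" using ji ex unfolding joint_isometry_def by blast
    then have "complex_of_real (\<Sum>j<d. (l2norm (?T j (basis_vec x)))\<^sup>2) * basis_vec x x = basis_vec x x"
      using joint_gram_mshift[OF bT ex] fun_cong by metis
    then have "complex_of_real (\<Sum>j<d. (l2norm (?T j (basis_vec x)))\<^sup>2) = 1"
      by (simp add: basis_vec_def del: of_real_sum of_real_power)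
    then show ?thesis by (simp only: of_real_eq_1_iff)
  qed
  have A1: "\<forall>x\<in>?V. 0 < a x \<and> (a x)\<^sup>2 = (\<Sum>j<d. (l2norm (?S j (basis_vec x)))\<^sup>2)"
  proof
    fix x assume x: "x \<in> ?V"
    have "(\<Sum>j<d. (l2norm (?S j (basis_vec x)))\<^sup>2) = (\<Sum>j<d. (a x)\<^sup>2 * (l2norm (?T j (basis_vec x)))\<^sup>2)"
    proof (rule sum.cong[OF refl])
      fix j assume "j \<in> {..<d}"
      then have "l2norm (?S j (basis_vec x)) = a x * l2norm (?T j (basis_vec x))"
        using Sx[OF x] cDa[OF x] by (simp add: l2norm_scale)
      then show "(l2norm (?S j (basis_vec x)))\<^sup>2 = (a x)\<^sup>2 * (l2norm (?T j (basis_vec x)))\<^sup>2"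
        by (simp add: power_mult_distrib)
    qed
    also have "\<dots> = (a x)\<^sup>2" using CT[OF x] by (simp flip: sum_distrib_left)
    finally show "0 < a x \<and> (a x)\<^sup>2 = (\<Sum>j<d. (l2norm (?S j (basis_vec x)))\<^sup>2)" using cDa[OF x] by simp
  qed
  have A3: "\<forall>j<d. \<forall>w\<in>?V. w j \<noteq> r j \<longrightarrow> lam j w = mu j w * a (pj Et j w)"
  proof (intro allI impI ballI)
    fix j w assume j: "j < d" and w: "w \<in> ?V" and wj: "w j \<noteq> r j"
    have px: "pj Et j w \<in> ?V" by (rule pj_V[OF t j w wj])
    have "?S j (basis_vec (pj Et j w)) w = complex_of_real (a (pj Et j w)) * ?T j (basis_vec (pj Et j w)) w"
      using Sx[OF px j] by simp
    then have "complex_of_real (lam j w) = complex_of_real (a (pj Et j w)) * complex_of_real (mu j w)"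
      using w wj by (simp add: mshift_basis)
    then show "lam j w = mu j w * a (pj Et j w)" by (simp flip: of_real_mult)
  qed
  show ?thesis using A1 Dform A3 by blast
qed


theorem mainTheorem17:
  fixes d :: nat
    and Vt :: "nat \<Rightarrow> 'a set" and Et :: "nat \<Rightarrow> ('a \<times> 'a) set" and r :: "nat \<Rightarrow> 'a"
    and lam :: "nat \<Rightarrow> (nat \<Rightarrow> 'a) \<Rightarrow> real"
  defines "V \<equiv> prodV d Vt"
    and "S \<equiv> (\<lambda>j. mshift d Vt Et r (lam j) j)"
  assumes d_pos: "1 \<le> d"
    and trees: "\<forall>j<d. rooted_dtree (Vt j) (Et j) (r j) \<and> leafless (Vt j) (Et j) \<and> countable (Vt j)"
    and weights: "positive_weights d Vt r lam"
    and bdd: "\<forall>j<d. bounded_op V (S j)"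
    and comm: "commuting_tuple V d S"
    and jli: "joint_left_invertible V d S"
  shows "(commuting_tuple V d (spherical_cauchy_dual V d S) \<longleftrightarrow>
            (\<forall>v \<in> V - {prod_root d r}. \<exists>c. \<forall>u \<in> Par d Vt Et v.
                (\<Sum>j<d. (l2norm (S j (basis_vec u)))\<^sup>2) = c)) \<and>
         ((\<forall>v \<in> V - {prod_root d r}. \<exists>c. \<forall>u \<in> Par d Vt Et v.
                (\<Sum>j<d. (l2norm (S j (basis_vec u)))\<^sup>2) = c) \<longleftrightarrow>
            (\<exists>mu D. isometric_decomp d Vt Et r lam mu D)) \<and>
         ((\<exists>mu D. isometric_decomp d Vt Et r lam mu D) \<longrightarrow>
            (\<forall>mu D mu' D'. isometric_decomp d Vt Et r lam mu D \<longrightarrow>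
                isometric_decomp d Vt Et r lam mu' D' \<longrightarrow>
                (\<forall>j<d. \<forall>f\<in>l2 V. mshift d Vt Et r (mu j) j f = mshift d Vt Et r (mu' j) j f) \<and>
                (\<forall>f\<in>l2 V. D f = D' f)))"

proof -
  have t: "\<forall>j<d. rooted_dtree (Vt j) (Et j) (r j)" using trees by blast
  have Sj: "S j = mshift d Vt Et r (lam j) j" for j by (simp add: S_def)
  have bS: "\<forall>j<d. bounded_op (prodV d Vt) (mshift d Vt Et r (lam j) j)"
    using bdd by (simp add: V_def S_def)
  define C where "C x = (\<Sum>j<d. (l2norm (S j (basis_vec x)))\<^sup>2)" for x
  have C0: "0 \<le> C x" for x unfolding C_def by (simp add: sum_nonneg)
  define G where "G = joint_gram V d S"
  have Gf: "G g = (\<lambda>x. complex_of_real (C x) * g x)" if g: "g \<in> l2 V" for g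
    using joint_gram_mshift[OF bS, of g] g unfolding G_def C_def V_def S_def by simp
  define R where "R = inverse_op V G"
  have RR: "is_inverse_op V G R"
  proof -
    have "\<exists>R. is_inverse_op V G R"
      using jli unfolding joint_left_invertible_def invertible_op_def G_def by blast
    then show ?thesis unfolding R_def inverse_op_def by (rule someI_ex)
  qed
  have bR: "bounded_op V R" using RR unfolding is_inverse_op_def by blast
  have Rl2: "R h \<in> l2 V" if "h \<in> l2 V" for h using bR that unfolding bounded_op_def by blast
  have GR: "G (R h) = h" if "h \<in> l2 V" for h using RR that unfolding is_inverse_op_def by blast
  have Cpos: "0 < C x" if x: "x \<in> V" for x
  proof -
    have ex: "basis_vec x \<in> l2 V" by (rule basis_l2[OF x])
    have "(\<lambda>y. complex_of_real (C y) * R (basis_vec x) y) = basis_vec x"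
      using GR[OF ex] Gf[OF Rl2[OF ex]] by simp
    from fun_cong[OF this, of x] have "complex_of_real (C x) * R (basis_vec x) x = 1"
      by (simp add: basis_vec_def)
    then have "C x \<noteq> 0" by auto
    then show ?thesis using C0[of x] by simp
  qed
  have Rf: "R h = (\<lambda>x. h x / complex_of_real (C x))" if h: "h \<in> l2 V" for h
  proof (rule ext)
    fix x
    have e: "(\<lambda>y. complex_of_real (C y) * R h y) = h" using GR[OF h] Gf[OF Rl2[OF h]] by simp
    show "R h x = h x / complex_of_real (C x)"
    proof (cases "x \<in> V")
      case True
      then have "C x \<noteq> 0" using Cpos by force
      then show ?thesis using fun_cong[OF e, of x] by (simp add: field_simps)
    next
      case False
      then show ?thesis using Rl2[OF h] h by (simp add: l2_def)
    qed
  qed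
  obtain KR where KR: "\<And>x. x \<in> V \<Longrightarrow> 1 / C x \<le> KR"
  proof -
    obtain K where K: "\<forall>f\<in>l2 V. l2norm (R f) \<le> K * l2norm f" using bR unfolding bounded_op_def by blast
    have "1 / C x \<le> K" if x: "x \<in> V" for x
    proof -
      have ex: "basis_vec x \<in> l2 V" by (rule basis_l2[OF x])
      have "R (basis_vec x) = (\<lambda>y. if y = x then complex_of_real (1 / C x) else 0)"
        using Rf[OF ex] by (auto simp: basis_vec_def)
      then have "l2norm (R (basis_vec x)) = 1 / C x"
        using Cpos[OF x] by (simp add: l2norm_single norm_divide)
      then show ?thesis using K ex l2norm_basis[of x] by force
    qed
    then show ?thesis using that by blast
  qed
  obtain KC where KC: "\<And>x. x \<in> V \<Longrightarrow> C x \<le> KC"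
  proof -
    have "\<forall>j\<in>{..<d}. \<exists>K. \<forall>f\<in>l2 V. l2norm (S j f) \<le> K * l2norm f"
      using bdd unfolding bounded_op_def by blast
    then obtain Kf where Kf: "\<forall>j\<in>{..<d}. \<forall>f\<in>l2 V. l2norm (S j f) \<le> Kf j * l2norm f"
      by (rule bchoice[THEN exE]) blast
    have "C x \<le> (\<Sum>j<d. (Kf j)\<^sup>2)" if x: "x \<in> V" for x
      unfolding C_def
    proof (rule sum_mono)
      fix j assume j: "j \<in> {..<d}"
      have ex: "basis_vec x \<in> l2 V" by (rule basis_l2[OF x])
      have "l2norm (S j (basis_vec x)) \<le> Kf j" using Kf j ex l2norm_basis[of x] by force
      then show "(l2norm (S j (basis_vec x)))\<^sup>2 \<le> (Kf j)\<^sup>2"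
        by (simp add: l2norm_nonneg power_mono)
    qed
    then show ?thesis using that by blast
  qed
  have lamc: "lam i x * lam j (pj Et i x) = lam j x * lam i (pj Et j x)"
    if "i < d" "j < d" "i \<noteq> j" "x \<in> V" "x i \<noteq> r i" "x j \<noteq> r j" for i j x
    using comm_weights[OF t, of lam i j x] comm that unfolding V_def S_def by blast
  have lampos: "0 < lam j w" if "j < d" "w \<in> V" "w j \<noteq> r j" for j w
    using weights that unfolding positive_weights_def V_def by blast
  have pjV: "pj Et j w \<in> V" if "j < d" "w \<in> V" "w j \<noteq> r j" for j w
    using pj_V[OF t, of j w] that unfolding V_def by blast
  define Ceq where "Ceq \<longleftrightarrow> (\<forall>x\<in>V. \<forall>i<d. \<forall>j<d. x i \<noteq> r i \<longrightarrow> x j \<noteq> r j \<longrightarrow> C (pj Et i x) = C (pj Et j x))"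

  have SD: "spherical_cauchy_dual V d S j f = S j (\<lambda>x. f x / complex_of_real (C x))" if f: "f \<in> l2 V" for j f
    unfolding spherical_cauchy_dual_def using Rf[OF f] unfolding R_def G_def by simp
  have SDl2: "spherical_cauchy_dual V d S j f \<in> l2 V" if f: "f \<in> l2 V" "j < d" for j f
    unfolding spherical_cauchy_dual_def using Rl2[OF f(1)] bdd f(2) unfolding R_def G_def bounded_op_def by blast
  have SD2: "spherical_cauchy_dual V d S i (spherical_cauchy_dual V d S j f) z =
      (if z \<in> V \<and> z i \<noteq> r i \<and> pj Et i z \<in> V \<and> pj Et i z j \<noteq> r j
       then complex_of_real (lam i z * lam j (pj Et i z) / C (pj Et i z)) *
            (f (pj Et j (pj Et i z)) / complex_of_real (C (pj Et j (pj Et i z)))) else 0)"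
    if f: "f \<in> l2 V" "j < d" for i j f z
  proof -
    have "spherical_cauchy_dual V d S i (spherical_cauchy_dual V d S j f) z
        = S i (\<lambda>x. S j (\<lambda>y. f y / complex_of_real (C y)) x / complex_of_real (C x)) z"
      using SD[OF SDl2[OF f]] SD[OF f(1)] by simp
    also have "\<dots> = (if z \<in> V \<and> z i \<noteq> r i \<and> pj Et i z \<in> V \<and> pj Et i z j \<noteq> r j
       then complex_of_real (lam i z * lam j (pj Et i z) / C (pj Et i z)) *
            (f (pj Et j (pj Et i z)) / complex_of_real (C (pj Et j (pj Et i z)))) else 0)"
      unfolding Sj V_def by (rule mshift2div)
    finally show ?thesis .
  qed
  have I_iff: "commuting_tuple V d (spherical_cauchy_dual V d S) \<longleftrightarrow> Ceq"
  proof
    assume c: "commuting_tuple V d (spherical_cauchy_dual V d S)"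
    show Ceq unfolding Ceq_def
    proof (intro ballI allI impI)
      fix x i j assume x: "x \<in> V" and ij: "i < d" "j < d" and xi: "x i \<noteq> r i" and xj: "x j \<noteq> r j"
      show "C (pj Et i x) = C (pj Et j x)"
      proof (cases "i = j")
        case True then show ?thesis by simp
      next
        case False
        let ?y = "pj Et j (pj Et i x)"
        have pi: "pj Et i x \<in> V" "pj Et i x j \<noteq> r j"
          using pjV[OF ij(1) x xi] pj_other[OF False, of Et x] xj by auto
        have pj': "pj Et j x \<in> V" "pj Et j x i \<noteq> r i"
          using pjV[OF ij(2) x xj] pj_other[of j i Et x] False xi by auto
        have y: "?y \<in> V" using pjV[OF ij(2) pi] .
        have yy: "pj Et i (pj Et j x) = ?y" using pj_comm[OF False, of Et x] by simp
        have ey: "basis_vec ?y \<in> l2 V" by (rule basis_l2[OF y])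
        have e: "spherical_cauchy_dual V d S i (spherical_cauchy_dual V d S j (basis_vec ?y)) x
           = spherical_cauchy_dual V d S j (spherical_cauchy_dual V d S i (basis_vec ?y)) x"
          using c ij ey unfolding commuting_tuple_def by metis
        have "complex_of_real (lam i x * lam j (pj Et i x) / C (pj Et i x) * (1 / C ?y))
            = complex_of_real (lam j x * lam i (pj Et j x) / C (pj Et j x) * (1 / C ?y))"
          using e unfolding SD2[OF ey ij(2)] SD2[OF ey ij(1)] using x xi xj pi pj' yy
          by (simp add: basis_vec_def)
        then have "lam i x * lam j (pj Et i x) / C (pj Et i x) * (1 / C ?y)
            = lam j x * lam i (pj Et j x) / C (pj Et j x) * (1 / C ?y)"
          by (simp only: of_real_eq_iff)
        moreover have "1 / C ?y \<noteq> 0" using Cpos[OF y] by simp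
        ultimately have "lam i x * lam j (pj Et i x) / C (pj Et i x) = lam j x * lam i (pj Et j x) / C (pj Et j x)"
          using mult_cancel_right by blast
        moreover have "lam i x * lam j (pj Et i x) = lam j x * lam i (pj Et j x)"
          by (rule lamc[OF ij False x xi xj])
        moreover have "0 < lam i x * lam j (pj Et i x)"
          using lampos[OF ij(1) x xi] lampos[OF ij(2) pi] by simp
        moreover have "0 < C (pj Et i x)" "0 < C (pj Et j x)" using Cpos pi pj' by auto
        ultimately show ?thesis by (auto simp: field_simps)
      qed
    qed
  next
    assume ceq: Ceq
    show "commuting_tuple V d (spherical_cauchy_dual V d S)"
      unfolding commuting_tuple_def
    proof (intro allI impI ballI ext)
      fix i j f z assume ij: "i < d" "j < d" and f: "f \<in> l2 V"
      show "spherical_cauchy_dual V d S i (spherical_cauchy_dual V d S j f) z =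
            spherical_cauchy_dual V d S j (spherical_cauchy_dual V d S i f) z"
      proof (cases "i = j")
        case True then show ?thesis by simp
      next
        case False
        have cs1: "(z \<in> V \<and> z i \<noteq> r i \<and> pj Et i z \<in> V \<and> pj Et i z j \<noteq> r j) \<longleftrightarrow> (z \<in> V \<and> z i \<noteq> r i \<and> z j \<noteq> r j)"
          using cond_sym[OF t ij False, of z] unfolding V_def .
        have cs2: "(z \<in> V \<and> z j \<noteq> r j \<and> pj Et j z \<in> V \<and> pj Et j z i \<noteq> r i) \<longleftrightarrow> (z \<in> V \<and> z i \<noteq> r i \<and> z j \<noteq> r j)"
          using cond_sym[OF t ij(2,1), of z] False unfolding V_def by auto
        show ?thesis
        proof (cases "z \<in> V \<and> z i \<noteq> r i \<and> z j \<noteq> r j")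
          case False
          have n1: "\<not> (z \<in> V \<and> z i \<noteq> r i \<and> pj Et i z \<in> V \<and> pj Et i z j \<noteq> r j)" using cs1 False by blast
          have n2: "\<not> (z \<in> V \<and> z j \<noteq> r j \<and> pj Et j z \<in> V \<and> pj Et j z i \<noteq> r i)" using cs2 False by blast
          show ?thesis unfolding SD2[OF f ij(2)] SD2[OF f ij(1)] if_not_P[OF n1] if_not_P[OF n2] ..
        next
          case True
          have "C (pj Et i z) = C (pj Et j z)" using ceq True ij unfolding Ceq_def by blast
          moreover have "lam i z * lam j (pj Et i z) = lam j z * lam i (pj Et j z)"
            using lamc[OF ij \<open>i \<noteq> j\<close>] True by blast
          ultimately have "lam i z * lam j (pj Et i z) / C (pj Et i z) = lam j z * lam i (pj Et j z) / C (pj Et j z)"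
            by simp
          then show ?thesis unfolding SD2[OF f ij(2)] SD2[OF f ij(1)] using cs1 cs2 True pj_comm[OF \<open>i \<noteq> j\<close>, of Et z]
            by simp
        qed
      qed
    qed
  qed

  have II_iff: "(\<forall>v \<in> V - {prod_root d r}. \<exists>c. \<forall>u \<in> Par d Vt Et v.
                (\<Sum>j<d. (l2norm (S j (basis_vec u)))\<^sup>2) = c) \<longleftrightarrow> Ceq"
  proof
    assume h: "\<forall>v \<in> V - {prod_root d r}. \<exists>c. \<forall>u \<in> Par d Vt Et v. (\<Sum>j<d. (l2norm (S j (basis_vec u)))\<^sup>2) = c"
    show Ceq unfolding Ceq_def
    proof (intro ballI allI impI)
      fix x i j assume x: "x \<in> V" and ij: "i < d" "j < d" and xi: "x i \<noteq> r i" and xj: "x j \<noteq> r j"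
      have "x \<noteq> prod_root d r" using prod_root_at[OF ij(1), of r] xi by auto
      then obtain c where c: "\<forall>u \<in> Par d Vt Et x. C u = c" using h x unfolding C_def by blast
      have "pj Et i x \<in> Par d Vt Et x" "pj Et j x \<in> Par d Vt Et x"
        using Par_char[OF t, of x] x ij xi xj unfolding V_def by blast+
      then show "C (pj Et i x) = C (pj Et j x)" using c by simp
    qed
  next
    assume ceq: Ceq
    show "\<forall>v \<in> V - {prod_root d r}. \<exists>c. \<forall>u \<in> Par d Vt Et v. (\<Sum>j<d. (l2norm (S j (basis_vec u)))\<^sup>2) = c"
    proof
      fix v assume v: "v \<in> V - {prod_root d r}"
      show "\<exists>c. \<forall>u \<in> Par d Vt Et v. (\<Sum>j<d. (l2norm (S j (basis_vec u)))\<^sup>2) = c"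
      proof (cases "Par d Vt Et v = {}")
        case True then show ?thesis by simp
      next
        case False
        then obtain u0 where u0: "u0 \<in> Par d Vt Et v" by blast
        have "C u = C u0" if u: "u \<in> Par d Vt Et v" for u
        proof -
          obtain k where k: "k < d" "v k \<noteq> r k" "u = pj Et k v"
            using Par_char[OF t, of v u] u v unfolding V_def by blast
          obtain k0 where k0: "k0 < d" "v k0 \<noteq> r k0" "u0 = pj Et k0 v"
            using Par_char[OF t, of v u0] u0 v unfolding V_def by blast
          show ?thesis using ceq k k0 v unfolding Ceq_def by blast
        qed
        then show ?thesis unfolding C_def by blast
      qed
    qed
  qed
  have III_ex: "\<exists>mu D. isometric_decomp d Vt Et r lam mu D" if ceq: Ceq
  proof -
    define c where "c x = sqrt (C x)" for x
    define mu where "mu j w = lam j w / c (pj Et j w)" for j w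
    define D where "D f = (\<lambda>x. complex_of_real (c x) * f x)" for f :: "(nat \<Rightarrow> 'a) \<Rightarrow> complex"
    define Mi where "Mi f = (\<lambda>x. complex_of_real (1 / c x) * f x)" for f :: "(nat \<Rightarrow> 'a) \<Rightarrow> complex"
    have c0: "0 \<le> c x" for x unfolding c_def using C0 by simp
    have cpos: "0 < c x" if "x \<in> V" for x unfolding c_def using Cpos[OF that] by simp
    have csq: "(c x)\<^sup>2 = C x" for x unfolding c_def using C0[of x] by simp
    have cbd: "cmod (complex_of_real (c x)) \<le> sqrt KC" if "x \<in> V" for x
      using KC[OF that] c0[of x] unfolding c_def by simp
    have cibd: "cmod (complex_of_real (1 / c x)) \<le> sqrt KR" if x: "x \<in> V" for x
    proof -
      have "1 / c x = sqrt (1 / C x)" unfolding c_def by (simp add: real_sqrt_divide)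
      also have "\<dots> \<le> sqrt KR" using KR[OF x] by simp
      finally show ?thesis using c0[of x] by (simp add: norm_divide)
    qed
    have bD: "bounded_op V D" unfolding D_def by (rule bounded_mult[OF cbd])
    have bMi: "bounded_op V Mi" unfolding Mi_def by (rule bounded_mult[OF cibd])
    have Tform: "mshift d Vt Et r (mu j) j = (\<lambda>f. S j (Mi f))" for j
      unfolding Sj Mi_def mu_def by (intro ext) (simp add: mshift_eq)
    have bT: "\<forall>j<d. bounded_op V (mshift d Vt Et r (mu j) j)"
      unfolding Tform using bounded_comp[OF _ bMi] bdd by blast
    have pwmu: "positive_weights d Vt r mu"
      unfolding positive_weights_def mu_def
      using lampos pjV cpos unfolding V_def by (simp add: divide_pos_pos)
    have muc: "mu i z * mu j (pj Et i z) = mu j z * mu i (pj Et j z)"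
      if ij: "i < d" "j < d" "i \<noteq> j" and z: "z \<in> V" "z i \<noteq> r i" "z j \<noteq> r j" for i j z
    proof -
      have "C (pj Et i z) = C (pj Et j z)" using ceq ij z unfolding Ceq_def by blast
      then have e1: "c (pj Et i z) = c (pj Et j z)" unfolding c_def by simp
      have e2: "pj Et i (pj Et j z) = pj Et j (pj Et i z)" by (rule pj_comm[OF ij(3)])
      show ?thesis unfolding mu_def using lamc[OF ij z] e1 e2 by (simp add: field_simps)
    qed
    have Tcomm: "commuting_tuple V d (\<lambda>j. mshift d Vt Et r (mu j) j)"
      unfolding commuting_tuple_def
    proof (intro allI impI ballI ext)
      fix i j f z assume ij: "i < d" "j < d" and f: "f \<in> l2 V"
      show "mshift d Vt Et r (mu i) i (mshift d Vt Et r (mu j) j f) z =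
            mshift d Vt Et r (mu j) j (mshift d Vt Et r (mu i) i f) z"
      proof (cases "i = j")
        case True then show ?thesis by simp
      next
        case False
        have cs1: "(z \<in> V \<and> z i \<noteq> r i \<and> pj Et i z \<in> V \<and> pj Et i z j \<noteq> r j) \<longleftrightarrow> (z \<in> V \<and> z i \<noteq> r i \<and> z j \<noteq> r j)"
          using cond_sym[OF t ij False, of z] unfolding V_def .
        have cs2: "(z \<in> V \<and> z j \<noteq> r j \<and> pj Et j z \<in> V \<and> pj Et j z i \<noteq> r i) \<longleftrightarrow> (z \<in> V \<and> z i \<noteq> r i \<and> z j \<noteq> r j)"
          using cond_sym[OF t ij(2,1), of z] False unfolding V_def by auto
        show ?thesis
        proof (cases "z \<in> V \<and> z i \<noteq> r i \<and> z j \<noteq> r j")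
          case False
          have n1: "\<not> (z \<in> V \<and> z i \<noteq> r i \<and> pj Et i z \<in> V \<and> pj Et i z j \<noteq> r j)" using cs1 False by blast
          have n2: "\<not> (z \<in> V \<and> z j \<noteq> r j \<and> pj Et j z \<in> V \<and> pj Et j z i \<noteq> r i)" using cs2 False by blast
          show ?thesis unfolding mshift2 V_def[symmetric] if_not_P[OF n1] if_not_P[OF n2] ..
        next
          case True
          have p1: "z \<in> V \<and> z i \<noteq> r i \<and> pj Et i z \<in> V \<and> pj Et i z j \<noteq> r j" using cs1 True by blast
          have p2: "z \<in> V \<and> z j \<noteq> r j \<and> pj Et j z \<in> V \<and> pj Et j z i \<noteq> r i" using cs2 True by blast
          have m: "mu i z * mu j (pj Et i z) = mu j z * mu i (pj Et j z)"
            using muc[OF ij \<open>i \<noteq> j\<close>] True by blast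
          have e2: "pj Et i (pj Et j z) = pj Et j (pj Et i z)" by (rule pj_comm[OF \<open>i \<noteq> j\<close>])
          have "complex_of_real (mu i z) * (complex_of_real (mu j (pj Et i z)) * f (pj Et j (pj Et i z)))
              = complex_of_real (mu j z) * (complex_of_real (mu i (pj Et j z)) * f (pj Et i (pj Et j z)))"
            unfolding e2 mult.assoc[symmetric] of_real_mult[symmetric] m ..
          then show ?thesis unfolding mshift2 V_def[symmetric] if_P[OF p1] if_P[OF p2] .
        qed
      qed
    qed
    have Tgram: "joint_gram V d (\<lambda>j. mshift d Vt Et r (mu j) j) f = f" if f: "f \<in> l2 V" for f
    proof -
      have jg: "joint_gram V d (\<lambda>j. mshift d Vt Et r (mu j) j) f
          = (\<lambda>x. complex_of_real (\<Sum>j<d. (l2norm (mshift d Vt Et r (mu j) j (basis_vec x)))\<^sup>2) * f x)"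
        using joint_gram_mshift[of d Vt Et r mu f] bT f unfolding V_def by simp
      show ?thesis unfolding jg
      proof (rule ext)
        fix x
        show "complex_of_real (\<Sum>j<d. (l2norm (mshift d Vt Et r (mu j) j (basis_vec x)))\<^sup>2) * f x = f x"
        proof (cases "x \<in> V")
          case False then show ?thesis using f by (simp add: l2_def)
        next
          case True
          have "l2norm (mshift d Vt Et r (mu j) j (basis_vec x)) = (1 / c x) * l2norm (S j (basis_vec x))" for j
          proof -
            have "Mi (basis_vec x) = (\<lambda>y. complex_of_real (1 / c x) * basis_vec x y)"
              unfolding Mi_def by (auto simp: basis_vec_def)
            then have "mshift d Vt Et r (mu j) j (basis_vec x) = S j (\<lambda>y. complex_of_real (1 / c x) * basis_vec x y)"
              by (simp only: Tform)
            also have "\<dots> = (\<lambda>w. complex_of_real (1 / c x) * S j (basis_vec x) w)"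
              by (simp only: Sj mshift_scale)
            finally show ?thesis using c0[of x] by (simp only: l2norm_scale norm_of_real abs_of_nonneg[OF divide_nonneg_nonneg[OF zero_le_one c0]])
          qed
          then have "(\<Sum>j<d. (l2norm (mshift d Vt Et r (mu j) j (basis_vec x)))\<^sup>2) = (1 / c x)\<^sup>2 * C x"
            unfolding C_def by (simp add: power_divide sum_distrib_left)
          also have "\<dots> = 1" using cpos[OF True] Cpos[OF True] csq[of x] by (simp add: field_simps)
          finally show ?thesis by simp
        qed
      qed
    qed
    have ji: "joint_isometry V d (\<lambda>j. mshift d Vt Et r (mu j) j)"
      unfolding joint_isometry_def using bT Tcomm Tgram by blast
    have diag: "diagonal_op V D" unfolding diagonal_op_def D_def by (rule exI[of _ "\<lambda>x. complex_of_real (c x)"]) simp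
    have pos: "positive_op V D" unfolding positive_op_def
    proof
      fix f assume f: "f \<in> l2 V"
      have "l2inner (D f) f = infsum (\<lambda>x. complex_of_real (c x * (cmod (f x))\<^sup>2)) UNIV"
        unfolding l2inner_def D_def
        by (rule infsum_cong) (simp add: mult.assoc flip: complex_norm_square)
      also have "\<dots> = complex_of_real (infsum (\<lambda>x. c x * (cmod (f x))\<^sup>2) UNIV)"
        by (rule infsum_of_real')
      finally show "Im (l2inner (D f) f) = 0 \<and> 0 \<le> Re (l2inner (D f) f)"
        using c0 by (simp add: infsum_nonneg)
    qed
    have MiD: "Mi (D f) = f \<and> D (Mi f) = f" if f: "f \<in> l2 V" for f
    proof -
      have "complex_of_real (1 / c x) * (complex_of_real (c x) * f x) = f x \<and>
            complex_of_real (c x) * (complex_of_real (1 / c x) * f x) = f x" for x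
      proof (cases "x \<in> V")
        case True then have "c x \<noteq> 0" using cpos by force
        then show ?thesis by (simp flip: of_real_mult mult.assoc)
      next
        case False then show ?thesis using f by (simp add: l2_def)
      qed
      then show ?thesis unfolding Mi_def D_def by simp
    qed
    have inv: "invertible_op V D"
      unfolding invertible_op_def is_inverse_op_def using bD bMi MiD by blast
    have Seq: "\<forall>j<d. \<forall>f\<in>l2 V. S j f = mshift d Vt Et r (mu j) j (D f)"
    proof (intro allI impI ballI ext)
      fix j f w assume j: "j < d" and f: "f \<in> l2 V"
      show "S j f w = mshift d Vt Et r (mu j) j (D f) w"
      proof (cases "w \<in> V \<and> w j \<noteq> r j")
        case True
        then have "c (pj Et j w) \<noteq> 0" using cpos pjV j by force
        then have "complex_of_real (c (pj Et j w)) \<noteq> 0" by simp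
        then show ?thesis using True unfolding Sj mu_def D_def V_def
          by (simp add: mshift_eq field_simps)
      next
        case False then show ?thesis using False unfolding Sj V_def by (auto simp: mshift_eq)
      qed
    qed
    have "isometric_decomp d Vt Et r lam mu D"
      unfolding isometric_decomp_def using pwmu ji diag pos inv bD Seq unfolding V_def S_def by simp
    then show ?thesis by blast
  qed

  have III_Ceq: Ceq if dec: "isometric_decomp d Vt Et r lam mu D" for mu D
  proof -
    obtain a where a1: "\<forall>x\<in>V. 0 < a x \<and> (a x)\<^sup>2 = C x"
      and a3: "\<forall>j<d. \<forall>w\<in>V. w j \<noteq> r j \<longrightarrow> lam j w = mu j w * a (pj Et j w)"
      using decomp_facts[OF t dec] unfolding C_def S_def V_def by blast
    have pwmu: "positive_weights d Vt r mu" using dec unfolding isometric_decomp_def by blast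
    have Tc: "commuting_tuple (prodV d Vt) d (\<lambda>j. mshift d Vt Et r (mu j) j)"
      using dec unfolding isometric_decomp_def joint_isometry_def by blast
    show Ceq unfolding Ceq_def
    proof (intro ballI allI impI)
      fix x i j assume x: "x \<in> V" and ij: "i < d" "j < d" and xi: "x i \<noteq> r i" and xj: "x j \<noteq> r j"
      show "C (pj Et i x) = C (pj Et j x)"
      proof (cases "i = j")
        case True then show ?thesis by simp
      next
        case False
        let ?y = "pj Et j (pj Et i x)"
        have pi: "pj Et i x \<in> V" "pj Et i x j \<noteq> r j"
          using pjV[OF ij(1) x xi] pj_other[OF False, of Et x] xj by auto
        have pj': "pj Et j x \<in> V" "pj Et j x i \<noteq> r i"
          using pjV[OF ij(2) x xj] pj_other[of j i Et x] False xi by auto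
        have y: "?y \<in> V" using pjV[OF ij(2) pi] .
        have yy: "pj Et i (pj Et j x) = ?y" using pj_comm[OF False, of Et x] by simp
        have mc: "mu i x * mu j (pj Et i x) = mu j x * mu i (pj Et j x)"
          using comm_weights[OF t Tc ij False, of x] x xi xj unfolding V_def by blast
        have mpos: "0 < mu i x * mu j (pj Et i x)"
          using pwmu x xi pi ij unfolding positive_weights_def V_def by simp
        have "mu i x * mu j (pj Et i x) * (a (pj Et i x) * a ?y) = mu j x * mu i (pj Et j x) * (a (pj Et j x) * a ?y)"
          using lamc[OF ij False x xi xj] a3 ij x xi xj pi pj' yy by (simp add: algebra_simps)
        then have "a (pj Et i x) * a ?y = a (pj Et j x) * a ?y" using mc mpos by auto
        then have "a (pj Et i x) = a (pj Et j x)" using a1 y by force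
        then show ?thesis using a1 pi pj' by metis
      qed
    qed
  qed

  have uniq: "(\<forall>j<d. \<forall>f\<in>l2 V. mshift d Vt Et r (mu j) j f = mshift d Vt Et r (mu' j) j f) \<and>
              (\<forall>f\<in>l2 V. D f = D' f)"
    if dec1: "isometric_decomp d Vt Et r lam mu D" and dec2: "isometric_decomp d Vt Et r lam mu' D'"
    for mu D mu' D'
  proof -
    obtain a where a1: "\<forall>x\<in>V. 0 < a x \<and> (a x)\<^sup>2 = C x"
      and a2: "\<forall>f\<in>l2 V. D f = (\<lambda>x. complex_of_real (a x) * f x)"
      and a3: "\<forall>j<d. \<forall>w\<in>V. w j \<noteq> r j \<longrightarrow> lam j w = mu j w * a (pj Et j w)"
      using decomp_facts[OF t dec1] unfolding C_def S_def V_def by blast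
    obtain a' where a1': "\<forall>x\<in>V. 0 < a' x \<and> (a' x)\<^sup>2 = C x"
      and a2': "\<forall>f\<in>l2 V. D' f = (\<lambda>x. complex_of_real (a' x) * f x)"
      and a3': "\<forall>j<d. \<forall>w\<in>V. w j \<noteq> r j \<longrightarrow> lam j w = mu' j w * a' (pj Et j w)"
      using decomp_facts[OF t dec2] unfolding C_def S_def V_def by blast
    have aa: "a x = a' x" if x: "x \<in> V" for x
    proof -
      have "(a x)\<^sup>2 = (a' x)\<^sup>2" "0 < a x" "0 < a' x" using a1 a1' x by auto
      then show ?thesis by (simp add: power2_eq_iff_nonneg)
    qed
    have m: "\<forall>j<d. \<forall>f\<in>l2 V. mshift d Vt Et r (mu j) j f = mshift d Vt Et r (mu' j) j f"
    proof (intro allI impI ballI ext)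
      fix j f w assume j: "j < d" and f: "f \<in> l2 V"
      show "mshift d Vt Et r (mu j) j f w = mshift d Vt Et r (mu' j) j f w"
      proof (cases "w \<in> V \<and> w j \<noteq> r j")
        case True
        have p: "pj Et j w \<in> V" using pjV j True by blast
        have "mu j w * a (pj Et j w) = mu' j w * a (pj Et j w)"
          using a3 a3' j True aa[OF p] by metis
        then have "mu j w = mu' j w" using a1 p by force
        then show ?thesis by (simp add: mshift_eq)
      next
        case False then show ?thesis unfolding V_def by (auto simp: mshift_eq)
      qed
    qed
    have "\<forall>f\<in>l2 V. D f = D' f"
    proof (intro ballI ext)
      fix f x assume f: "f \<in> l2 V"
      show "D f x = D' f x"
      proof (cases "x \<in> V")
        case True then show ?thesis using a2 a2' f aa by simp
      next
        case False then show ?thesis using a2 a2' f by (simp add: l2_def)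
      qed
    qed
    then show ?thesis using m by blast
  qed

  show ?thesis
    using I_iff II_iff III_ex III_Ceq uniq by blast
qed

end
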